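(* The oriented chromatic number is unbounded on the asymmetrical digraphs of $\mathcal{LE}_2$: for every positive integer $m$ there is an asymmetrical digraph $D\in\mathcal{LE}_2$ with $\chi_o(D)\geq m$.
   Context: All digraphs are finite, without loops or multiple arcs. A digraph is asymmetrical if it has no pair of opposite arcs $(u,v),(v,u)$. For an asymmetrical digraph $D$, an oriented $k$-colouring is a proper colouring $V(D)\to\{1,\ldots,k\}$ (vertices joined by an arc get distinct colours) such that all arcs between any two colour classes have the same direction; the oriented chromatic number $\chi_o(D)$ is the least such $k$. Paths and cycles are directed; the length of a path or cycle is its number of arcs. A digraph is strong if for every ordered pair of vertices $x,y$ there is a directed path from $x$ to $y$. For a subdigraph $H$ of a digraph $D$, an ear of $H$ in $D$ is either a directed path in $D$ whose two end vertices lie in $H$ and whose internal vertices do not lie in $H$, or a directed cycle in $D$ having exactly one vertex in $H$. An ear decomposition of a strong digraph $D$ is a sequence $(D_0,D_1,\ldots,D_k)$ of strong subdigraphs of $D$ such that $D_0$ is a directed cycle, $D_{j+1}=D_j\cup P_j$ where $P_j$ is an ear of $D_j$ in $D$ for every $j\in\{0,\ldots,k-1\}$, and $D_k=D$. For an integer $i\geq 1$, $\mathcal{LE}_i$ denotes the family of strong digraphs having an ear decomposition in which every ear has length at least $i$. *)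

theory Defs
  imports Main
begin

definition digraph :: "'a set \<Rightarrow> ('a \<times> 'a) set \<Rightarrow> bool" where
  "digraph V A \<longleftrightarrow> finite V \<and> A \<subseteq> V \<times> V \<and> (\<forall>(u,v)\<in>A. u \<noteq> v)"

definition asymmetrical :: "('a \<times> 'a) set \<Rightarrow> bool" where
  "asymmetrical A \<longleftrightarrow> (\<forall>u v. (u,v) \<in> A \<longrightarrow> (v,u) \<notin> A)"

text \<open>Oriented k-colouring: proper, colours in {1..k}, and all arcs between two
colour classes have the same direction.\<close>

definition oriented_colouring :: "'a set \<Rightarrow> ('a \<times> 'a) set \<Rightarrow> nat \<Rightarrow> ('a \<Rightarrow> nat) \<Rightarrow> bool" where
  "oriented_colouring V A k c \<longleftrightarrow>
     (\<forall>v\<in>V. c v \<in> {1..k}) \<and>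
     (\<forall>(u,v)\<in>A. c u \<noteq> c v) \<and>
     (\<forall>(u,v)\<in>A. \<forall>(x,y)\<in>A. \<not> (c u = c y \<and> c v = c x))"

definition oriented_chromatic_number :: "'a set \<Rightarrow> ('a \<times> 'a) set \<Rightarrow> nat" where
  "oriented_chromatic_number V A = (LEAST k. \<exists>c. oriented_colouring V A k c)"

definition path_arcs :: "'a list \<Rightarrow> ('a \<times> 'a) set" where
  "path_arcs ps = set (zip ps (tl ps))"

definition cycle_arcs :: "'a list \<Rightarrow> ('a \<times> 'a) set" where
  "cycle_arcs ps = insert (last ps, hd ps) (path_arcs ps)"

definition is_dpath :: "('a \<times> 'a) set \<Rightarrow> 'a list \<Rightarrow> bool" where
  "is_dpath A ps \<longleftrightarrow> distinct ps \<and> length ps \<ge> 2 \<and> path_arcs ps \<subseteq> A"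

definition is_dcycle :: "('a \<times> 'a) set \<Rightarrow> 'a list \<Rightarrow> bool" where
  "is_dcycle A ps \<longleftrightarrow> distinct ps \<and> length ps \<ge> 2 \<and> cycle_arcs ps \<subseteq> A"

definition subdigraph :: "'a set \<Rightarrow> ('a \<times> 'a) set \<Rightarrow> 'a set \<Rightarrow> ('a \<times> 'a) set \<Rightarrow> bool" where
  "subdigraph VH AH V A \<longleftrightarrow> VH \<subseteq> V \<and> AH \<subseteq> A \<and> AH \<subseteq> VH \<times> VH"

definition strong :: "'a set \<Rightarrow> ('a \<times> 'a) set \<Rightarrow> bool" where
  "strong V A \<longleftrightarrow> (\<forall>x\<in>V. \<forall>y\<in>V. (x,y) \<in> (A \<inter> V \<times> V)\<^sup>*)"

definition is_ear :: "('a \<times> 'a) set \<Rightarrow> 'a set \<Rightarrow> 'a list \<Rightarrow> 'a set \<Rightarrow> ('a \<times> 'a) set \<Rightarrow> nat \<Rightarrow> bool" where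
  "is_ear A VH ps EV EA len \<longleftrightarrow>
     (is_dpath A ps \<and> hd ps \<in> VH \<and> last ps \<in> VH \<and>
        (\<forall>v\<in>set (butlast (tl ps)). v \<notin> VH) \<and>
        EV = set ps \<and> EA = path_arcs ps \<and> len = length ps - 1)
   \<or> (is_dcycle A ps \<and> card (set ps \<inter> VH) = 1 \<and>
        EV = set ps \<and> EA = cycle_arcs ps \<and> len = length ps)"

definition ear_decomposition_min :: "nat \<Rightarrow> 'a set \<Rightarrow> ('a \<times> 'a) set \<Rightarrow> nat \<Rightarrow> (nat \<Rightarrow> 'a set \<times> ('a \<times> 'a) set) \<Rightarrow> bool" where
  "ear_decomposition_min i V A k Ds \<longleftrightarrow>
     (\<forall>j\<le>k. subdigraph (fst (Ds j)) (snd (Ds j)) V A \<and> strong (fst (Ds j)) (snd (Ds j))) \<and>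
     (\<exists>cyc. is_dcycle A cyc \<and> Ds 0 = (set cyc, cycle_arcs cyc)) \<and>
     (\<forall>j<k. \<exists>ps EV EA len. is_ear A (fst (Ds j)) ps EV EA len \<and> len \<ge> i \<and>
             Ds (Suc j) = (fst (Ds j) \<union> EV, snd (Ds j) \<union> EA)) \<and>
     Ds k = (V, A)"

definition LE :: "nat \<Rightarrow> 'a set \<Rightarrow> ('a \<times> 'a) set \<Rightarrow> bool" where
  "LE i V A \<longleftrightarrow> digraph V A \<and> strong V A \<and> (\<exists>k Ds. ear_decomposition_min i V A k Ds)"

end

theory Submission imports Defs begin
lemma path_arcs_sub: "path_arcs ps \<subseteq> set ps \<times> set ps"
proof -
  have "set (tl ps) \<subseteq> set ps" by (cases ps) auto
  then show ?thesis unfolding path_arcs_def by (auto dest: set_zip_leftD set_zip_rightD)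
qed

lemma cycle_arcs_sub: "ps \<noteq> [] \<Longrightarrow> cycle_arcs ps \<subseteq> set ps \<times> set ps"
  unfolding cycle_arcs_def using path_arcs_sub[of ps] by auto

lemma path_arc_nth: "Suc i < length ps \<Longrightarrow> (ps!i, ps!Suc i) \<in> path_arcs ps"
  unfolding path_arcs_def set_zip by (auto simp: nth_tl intro!: exI[of _ i])

lemma path_reach: "i \<le> j \<Longrightarrow> j < length ps \<Longrightarrow> (ps!i, ps!j) \<in> (path_arcs ps)\<^sup>*"
proof (induction j)
  case 0 then show ?case by simp
next
  case (Suc j)
  show ?case
  proof (cases "i = Suc j")
    case True then show ?thesis by simp
  next
    case False
    then have "(ps!i, ps!j) \<in> (path_arcs ps)\<^sup>*" using Suc by auto
    moreover have "(ps!j, ps!Suc j) \<in> path_arcs ps" using Suc path_arc_nth by auto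
    ultimately show ?thesis by (rule rtrancl_into_rtrancl)
  qed
qed

lemma cycle_reach:
  assumes "ps \<noteq> []" "x \<in> set ps" "y \<in> set ps"
  shows "(x, y) \<in> (cycle_arcs ps)\<^sup>*"
proof -
  obtain i j where i: "i < length ps" "x = ps!i" and j: "j < length ps" "y = ps!j"
    using assms by (auto simp: in_set_conv_nth)
  have sub: "path_arcs ps \<subseteq> cycle_arcs ps" unfolding cycle_arcs_def by auto
  have "(x, last ps) \<in> (cycle_arcs ps)\<^sup>*"
    using path_reach[of i "length ps - 1" ps] i assms(1) rtrancl_mono[OF sub]
    by (auto simp: last_conv_nth)
  moreover have "(last ps, hd ps) \<in> cycle_arcs ps" unfolding cycle_arcs_def by auto
  moreover have "(hd ps, y) \<in> (cycle_arcs ps)\<^sup>*"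
    using path_reach[of 0 j ps] j assms(1) rtrancl_mono[OF sub]
    by (auto simp: hd_conv_nth)
  ultimately show ?thesis by (meson rtrancl.rtrancl_into_rtrancl rtrancl_trans)
qed

definition EA :: "('a \<Rightarrow> 'a) \<Rightarrow> ('a \<Rightarrow> 'a) \<Rightarrow> 'a set \<Rightarrow> ('a \<times> 'a) set" where
  "EA fa fb X = (\<Union>w\<in>X. {(fa w, w), (w, fb w)})"

lemma EA_mono: "X \<subseteq> Y \<Longrightarrow> EA fa fb X \<subseteq> EA fa fb Y"
  unfolding EA_def by blast

lemma EA_sub: "cyc \<noteq> [] \<Longrightarrow> \<forall>w\<in>X. fa w \<in> set cyc \<and> fb w \<in> set cyc \<Longrightarrow>
   cycle_arcs cyc \<union> EA fa fb X \<subseteq> (set cyc \<union> X) \<times> (set cyc \<union> X)"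
  using cycle_arcs_sub[of cyc] unfolding EA_def by blast

lemma strong_aux:
  assumes ne: "cyc \<noteq> []" and ab: "\<forall>w\<in>X. fa w \<in> set cyc \<and> fb w \<in> set cyc"
  shows "strong (set cyc \<union> X) (cycle_arcs cyc \<union> EA fa fb X)"
proof -
  let ?R = "cycle_arcs cyc \<union> EA fa fb X"
  have sub: "?R \<subseteq> (set cyc \<union> X) \<times> (set cyc \<union> X)"
    using cycle_arcs_sub[OF ne] ab by (auto simp: EA_def)
  have cc: "(x,y) \<in> ?R\<^sup>*" if "x \<in> set cyc" "y \<in> set cyc" for x y
    using cycle_reach[OF ne that] rtrancl_mono[of "cycle_arcs cyc" ?R] by auto
  have h: "hd cyc \<in> set cyc" using ne by simp
  have to: "(x, hd cyc) \<in> ?R\<^sup>*" if "x \<in> set cyc \<union> X" for x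
  proof (cases "x \<in> set cyc")
    case True then show ?thesis using cc h by auto
  next
    case False
    then have "x \<in> X" using that by auto
    then have "(x, fb x) \<in> ?R" "fb x \<in> set cyc" using ab by (auto simp: EA_def)
    then show ?thesis using cc[OF _ h] by (meson converse_rtrancl_into_rtrancl)
  qed
  have fr: "(hd cyc, x) \<in> ?R\<^sup>*" if "x \<in> set cyc \<union> X" for x
  proof (cases "x \<in> set cyc")
    case True then show ?thesis using cc h by auto
  next
    case False
    then have "x \<in> X" using that by auto
    then have "(fa x, x) \<in> ?R" "fa x \<in> set cyc" using ab by (auto simp: EA_def)
    then show ?thesis using cc[OF h] by (meson rtrancl.rtrancl_into_rtrancl)
  qed
  have "?R \<inter> (set cyc \<union> X) \<times> (set cyc \<union> X) = ?R" using sub by blast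
  then show ?thesis unfolding strong_def using to fr by (metis rtrancl_trans)
qed

lemma build_LE2:
  assumes dc: "distinct cyc" "length cyc \<ge> 2"
    and dw: "distinct ws"
    and ab: "\<forall>w\<in>set ws. fa w \<in> set cyc \<and> fb w \<in> set cyc \<and> fa w \<noteq> fb w \<and> w \<notin> set cyc"
    and V: "V = set cyc \<union> set ws" and A: "A = cycle_arcs cyc \<union> EA fa fb (set ws)"
  shows "LE 2 V A"
proof -
  have ne: "cyc \<noteq> []" using dc by auto
  define Ds where "Ds t = (set cyc \<union> set (take t ws), cycle_arcs cyc \<union> EA fa fb (set (take t ws)))" for t
  have subA: "A \<subseteq> V \<times> V" using cycle_arcs_sub[OF ne] ab unfolding A V by (auto simp: EA_def)
  have dg: "digraph V A"
  proof -
    have "\<forall>(u,v)\<in>cycle_arcs cyc. u \<noteq> v"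
    proof
      fix p assume p: "p \<in> cycle_arcs cyc"
      obtain u v where uv: "p = (u,v)" by force
      show "case p of (u,v) \<Rightarrow> u \<noteq> v"
      proof (cases "(u,v) \<in> path_arcs cyc")
        case True
        then obtain i where "i < length cyc - 1" "u = cyc!i" "v = cyc!Suc i"
          unfolding path_arcs_def set_zip by (auto simp: nth_tl)
        then show ?thesis using dc uv by (simp add: nth_eq_iff_index_eq)
      next
        case False
        then have "u = last cyc" "v = hd cyc" using p uv unfolding cycle_arcs_def by auto
        then have "u = cyc!(length cyc - 1)" "v = cyc!0" using ne by (auto simp: last_conv_nth hd_conv_nth)
        moreover have "length cyc - 1 < length cyc" "0 < length cyc" "length cyc - 1 \<noteq> 0" using dc by auto
        ultimately show ?thesis using dc uv nth_eq_iff_index_eq[OF dc(1), of "length cyc - 1" 0] by simp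
      qed
    qed
    then show ?thesis unfolding digraph_def using subA ab unfolding V A by (auto simp: EA_def)
  qed
  have ab': "\<forall>w\<in>set (take t ws). fa w \<in> set cyc \<and> fb w \<in> set cyc" for t
  proof
    fix w assume "w \<in> set (take t ws)"
    then have "w \<in> set ws" by (rule in_set_takeD)
    then show "fa w \<in> set cyc \<and> fb w \<in> set cyc" using ab by blast
  qed
  have ed: "ear_decomposition_min 2 V A (length ws) Ds"
    unfolding ear_decomposition_min_def
  proof (intro conjI allI impI)
    fix j assume "j \<le> length ws"
    show "subdigraph (fst (Ds j)) (snd (Ds j)) V A"
      unfolding subdigraph_def Ds_def V A fst_conv snd_conv
      using EA_sub[OF ne ab'[of j]] EA_mono[OF set_take_subset[of j ws], of fa fb] set_take_subset[of j ws]
      by blast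
    show "strong (fst (Ds j)) (snd (Ds j))"
      unfolding Ds_def using strong_aux[OF ne ab'[of j]] by simp
  next
    show "\<exists>cyc. is_dcycle A cyc \<and> Ds 0 = (set cyc, cycle_arcs cyc)"
      using dc by (auto simp: Ds_def is_dcycle_def A EA_def intro!: exI[of _ cyc])
  next
    fix j assume j: "j < length ws"
    let ?w = "ws!j"
    have w: "?w \<in> set ws" using j by simp
    have tk: "take (Suc j) ws = take j ws @ [?w]" using j by (simp add: take_Suc_conv_app_nth)
    have "distinct (take (Suc j) ws)" using dw by simp
    then have nin: "?w \<notin> set (take j ws)" unfolding tk by simp
    show "\<exists>ps EV EA len. is_ear A (fst (Ds j)) ps EV EA len \<and> len \<ge> 2 \<and>
             Ds (Suc j) = (fst (Ds j) \<union> EV, snd (Ds j) \<union> EA)"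
    proof (intro exI conjI)
      show "is_ear A (fst (Ds j)) [fa ?w, ?w, fb ?w] {fa ?w, ?w, fb ?w} {(fa ?w, ?w), (?w, fb ?w)} 2"
        unfolding is_ear_def
        apply (rule disjI1)
        using w ab nin by (auto simp: is_dpath_def path_arcs_def A EA_def Ds_def)
      show "Ds (Suc j) = (fst (Ds j) \<union> {fa ?w, ?w, fb ?w}, snd (Ds j) \<union> {(fa ?w, ?w), (?w, fb ?w)})"
        unfolding Ds_def tk using w ab by (auto simp: EA_def)
    qed simp
  next
    show "Ds (length ws) = (V, A)" by (simp add: Ds_def V A)
  qed
  have "strong V A" using strong_aux[OF ne, of "set ws" fa fb] ab unfolding V A by auto
  then show ?thesis unfolding LE_def using dg ed by blast
qed

lemma cyc_arcs_upt:
  assumes "(u,v) \<in> cycle_arcs [0..<n]" "n \<ge> 1"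
  shows "u < n \<and> v < n \<and> (v = Suc u \<or> (u = n - 1 \<and> v = 0))"
proof (cases "(u,v) \<in> path_arcs [0..<n]")
  case True
  then obtain k where "k < n - 1" "u = k" "v = Suc k"
    unfolding path_arcs_def set_zip by (auto simp: nth_tl)
  then show ?thesis by auto
next
  case False
  then show ?thesis using assms unfolding cycle_arcs_def by (auto simp: last_upt)
qed

theorem mainTheorem19:
  fixes m :: nat
  assumes "m \<ge> 1"
  shows "\<exists>(V :: nat set) (A :: (nat \<times> nat) set).
           digraph V A \<and> asymmetrical A \<and> LE 2 V A \<and> oriented_chromatic_number V A \<ge> m"
proof -
  define n where "n = m + 3"
  have n3: "n \<ge> 3" unfolding n_def by simp
  define cyc where "cyc = [0..<n]"
  define W where "W = {n + i*n + j | i j. i < j \<and> j < n}"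
  define fa where "fa w = (w - n) div n" for w
  define fb where "fb w = (w - n) mod n" for w
  define V where "V = set cyc \<union> W"
  define A where "A = cycle_arcs cyc \<union> EA fa fb W"
  have Wsub: "W \<subseteq> (\<lambda>(i,j). n + i*n + j) ` ({..<n} \<times> {..<n})" unfolding W_def by auto
  have finW: "finite W" using finite_subset[OF Wsub] by blast
  have Wprop: "fa w = i \<and> fb w = j \<and> n \<le> w" if "w = n + i*n + j" "j < n" for w i j
  proof -
    have "w - n = i*n + j" using that by simp
    moreover have "(i*n + j) div n = i" "(i*n + j) mod n = j" using that(2) by simp_all
    ultimately show ?thesis unfolding fa_def fb_def using that(1) by simp
  qed
  have Wprop2: "fa w < n \<and> fb w < n \<and> fa w \<noteq> fb w \<and> n \<le> w" if wW: "w \<in> W" for w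
  proof -
    obtain i j where ij: "i < j" "j < n" "w = n + i*n + j" using wW unfolding W_def by blast
    have "fa w = i" "fb w = j" "n \<le> w" using Wprop[OF ij(3) ij(2)] by blast+
    then show ?thesis using ij by simp
  qed
  define ws where "ws = sorted_list_of_set W"
  have sws: "set ws = W" "distinct ws" unfolding ws_def using finW by auto
  have LE: "LE 2 V A"
  proof (rule build_LE2[of cyc ws fa fb])
    show "distinct cyc" "length cyc \<ge> 2" unfolding cyc_def using n3 by auto
    show "distinct ws" by (rule sws(2))
    show "\<forall>w\<in>set ws. fa w \<in> set cyc \<and> fb w \<in> set cyc \<and> fa w \<noteq> fb w \<and> w \<notin> set cyc"
      unfolding sws cyc_def using Wprop2 by (auto simp: not_less[symmetric])
    show "V = set cyc \<union> set ws" "A = cycle_arcs cyc \<union> EA fa fb (set ws)"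
      unfolding V_def A_def sws by auto
  qed
  then have dg: "digraph V A" unfolding LE_def by blast
  have asym: "asymmetrical A"
    unfolding asymmetrical_def
  proof (intro allI impI)
    fix u v assume uv: "(u,v) \<in> A"
    have Ach: "(p < n \<and> q < n \<and> (q = Suc p \<or> (p = n - 1 \<and> q = 0))) \<or>
               (p < n \<and> n \<le> q \<and> p = fa q \<and> fa q \<noteq> fb q) \<or> (n \<le> p \<and> q < n \<and> q = fb p \<and> fa p \<noteq> fb p)"
      if pq: "(p,q) \<in> A" for p q
    proof (cases "(p,q) \<in> cycle_arcs cyc")
      case True
      then show ?thesis using cyc_arcs_upt[of p q n] n3 unfolding cyc_def by simp
    next
      case False
      then have "(p,q) \<in> EA fa fb W" using pq A_def by blast
      then obtain w where w: "w \<in> W" "(p,q) = (fa w, w) \<or> (p,q) = (w, fb w)" unfolding EA_def by blast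
      show ?thesis using Wprop2[OF w(1)] w(2) by auto
    qed
    show "(v,u) \<notin> A"
    proof
      assume vu: "(v,u) \<in> A"
      show False using Ach[OF uv] Ach[OF vu] n3 by linarith
    qed
  qed
  have lower: "k \<ge> n" if c: "oriented_colouring V A k c" for k c
  proof -
    have inj: "inj_on c {..<n}"
    proof (rule inj_onI, rule ccontr)
      fix x y assume xy: "x \<in> {..<n}" "y \<in> {..<n}" "c x = c y" "x \<noteq> y"
      have key: "c i \<noteq> c j" if "i < j" "j < n" for i j
      proof -
        define w where "w = n + i*n + j"
        have "w \<in> W" unfolding W_def w_def using that by blast
        moreover have "fa w = i" "fb w = j" using Wprop[OF w_def that(2)] by auto
        ultimately have "(i,w) \<in> A" "(w,j) \<in> A" unfolding A_def EA_def by force+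
        then show ?thesis using c unfolding oriented_colouring_def by fastforce
      qed
      show False
      proof (cases "x < y")
        case True then show False using key xy by auto
      next
        case False then have "y < x" using xy by auto
        then show False using key xy by fastforce
      qed
    qed
    have "c ` {..<n} \<subseteq> {1..k}" using c unfolding oriented_colouring_def V_def cyc_def by auto
    then have "card (c ` {..<n}) \<le> card {1..k}" by (intro card_mono) auto
    then show ?thesis using card_image[OF inj] by simp
  qed
  have ex: "\<exists>c. oriented_colouring V A (Suc (Max V)) c"
  proof (intro exI)
    have finV: "finite V" using dg unfolding digraph_def by blast
    have AV: "A \<subseteq> V \<times> V" using dg unfolding digraph_def by blast
    show "oriented_colouring V A (Suc (Max V)) Suc"
      unfolding oriented_colouring_def
    proof (intro conjI)
      show "\<forall>v\<in>V. Suc v \<in> {1..Suc (Max V)}" using finV by auto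
      show "\<forall>(u,v)\<in>A. Suc u \<noteq> Suc v" using dg unfolding digraph_def by auto
      show "\<forall>(u,v)\<in>A. \<forall>(x,y)\<in>A. \<not> (Suc u = Suc y \<and> Suc v = Suc x)"
        using asym unfolding asymmetrical_def by auto
    qed
  qed
  have "oriented_chromatic_number V A \<ge> n"
  proof -
    have ex2: "\<exists>k. \<exists>c. oriented_colouring V A k c" using ex by blast
    show ?thesis unfolding oriented_chromatic_number_def using lower LeastI_ex[OF ex2] by blast
  qed
  then have "oriented_chromatic_number V A \<ge> m" unfolding n_def by simp
  then show ?thesis using dg asym LE by blast
qed

end
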